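(* For $k\ge2$ the polynomial $P_k(x)$ has integer coefficients. If $\ell>3$ is prime, then $$P_{\frac{\ell+1}{2}}(x)\equiv\frac{\ell+1}{2}\left(1+(1-24x)^{\frac{\ell-1}{2}}\right)\pmod{\ell}$$ (coefficientwise).
   Context: $P_k(x)\in\mathbb{Q}[x]$ is defined by $P_0:=0$, $P_1:=1$, and for $k\ge2$, $P_k(x):=-\frac{1}{(2k-1)(k-1)}\sum_{i=1}^{k-1}\left(6x\binom{2k}{2i}(2^{2i-1}-1)+\binom{2k}{2i+2}(2^{2i+1}-1)-2^{2i}\binom{2k}{2i+1}+\binom{2k}{2i}\right)P_{k-i}(x)$. *)

theory Defs
  imports "HOL-Computational_Algebra.Polynomial"
begin

function P :: "nat \<Rightarrow> rat poly" where
  "P k = (if k = 0 then 0 else if k = 1 then 1 else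
     smult (- 1 / (of_nat (2 * k - 1) * of_nat (k - 1)))
       (\<Sum>i = 1..k - 1.
          ([:0, 6 * of_nat ((2 * k) choose (2 * i)) * (2 ^ (2 * i - 1) - 1):]
           + [: of_nat ((2 * k) choose (2 * i + 2)) * (2 ^ (2 * i + 1) - 1)
                - 2 ^ (2 * i) * of_nat ((2 * k) choose (2 * i + 1))
                + of_nat ((2 * k) choose (2 * i)) :]) * P (k - i)))"
  by auto
termination
  by (relation "measure id") auto

end

theory Submission
  imports Defs "HOL-Computational_Algebra.Computational_Algebra"
begin

lemma sum_parity_split: fixes k :: nat shows
  "(\<Sum>j\<le>2*k. f j) = (\<Sum>i\<le>k. f (2*i)) + (\<Sum>i<k. f (2*i+1))"
proof (induction k)
  case 0 then show ?case by simp
next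
  case (Suc k)
  have e: "2 * Suc k = Suc (Suc (2*k))" by simp
  show ?case unfolding e sum.atMost_Suc using Suc
    by (simp add: sum.atMost_Suc algebra_simps)
qed

lemma ev_od:
  fixes r c :: "'a::comm_ring_1"
  shows "(r + c)^(2*k) = (\<Sum>i\<le>k. of_nat ((2*k) choose (2*i)) * c^(2*i) * r^(2*k-2*i))
            + (\<Sum>i<k. of_nat ((2*k) choose (2*i+1)) * c^(2*i+1) * r^(2*k-(2*i+1)))"
    and "(r - c)^(2*k) = (\<Sum>i\<le>k. of_nat ((2*k) choose (2*i)) * c^(2*i) * r^(2*k-2*i))
            - (\<Sum>i<k. of_nat ((2*k) choose (2*i+1)) * c^(2*i+1) * r^(2*k-(2*i+1)))"
proof -
  have "(r + c)^(2*k) = (c + r)^(2*k)" by (simp add: add.commute)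
  also have "\<dots> = (\<Sum>j\<le>2*k. of_nat ((2*k) choose j) * c^j * r^(2*k-j))"
    by (rule binomial_ring)
  finally show "(r + c)^(2*k) = (\<Sum>i\<le>k. of_nat ((2*k) choose (2*i)) * c^(2*i) * r^(2*k-2*i))
            + (\<Sum>i<k. of_nat ((2*k) choose (2*i+1)) * c^(2*i+1) * r^(2*k-(2*i+1)))"
    by (simp add: sum_parity_split[where f="\<lambda>j. of_nat ((2*k) choose j) * c^j * r^(2*k-j)"])
  have "(r - c)^(2*k) = ((-c) + r)^(2*k)" by simp
  also have "\<dots> = (\<Sum>j\<le>2*k. of_nat ((2*k) choose j) * (-c)^j * r^(2*k-j))"
    by (rule binomial_ring)
  also have "\<dots> = (\<Sum>i\<le>k. of_nat ((2*k) choose (2*i)) * c^(2*i) * r^(2*k-2*i))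
            + (\<Sum>i<k. of_nat ((2*k) choose (2*i+1)) * (-(c^(2*i+1))) * r^(2*k-(2*i+1)))"
    by (simp add: sum_parity_split[where f="\<lambda>j. of_nat ((2*k) choose j) * (-c)^j * r^(2*k-j)"])
  finally show "(r - c)^(2*k) = (\<Sum>i\<le>k. of_nat ((2*k) choose (2*i)) * c^(2*i) * r^(2*k-2*i))
            - (\<Sum>i<k. of_nat ((2*k) choose (2*i+1)) * c^(2*i+1) * r^(2*k-(2*i+1)))"
    by (simp add: sum_negf)
qed

definition Tv :: "nat \<Rightarrow> nat \<Rightarrow> rat \<Rightarrow> rat" where
 "Tv k i x = x * (6 * of_nat ((2*k) choose (2*i)) * (2^(2*i-1) - 1))
    + (of_nat ((2*k) choose (2*i+2)) * (2^(2*i+1) - 1) - 2^(2*i) * of_nat ((2*k) choose (2*i+1))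
       + of_nat ((2*k) choose (2*i)))"

lemma bnd1: fixes f :: "nat \<Rightarrow> 'a::comm_monoid_add"
  assumes "1 \<le> k" shows "(\<Sum>i\<le>k. f i) = f 0 + (\<Sum>i=1..k-1. f i) + f k"
proof -
  obtain m where k: "k = Suc m" using assms by (cases k) auto
  have "(\<Sum>i\<le>k. f i) = (\<Sum>i=0..Suc m. f i)" by (simp add: k atLeast0AtMost)
  also have "\<dots> = f 0 + (\<Sum>i=Suc 0..Suc m. f i)" by (rule sum.atLeast_Suc_atMost) simp
  also have "(\<Sum>i=Suc 0..Suc m. f i) = (\<Sum>i=Suc 0..m. f i) + f (Suc m)" by simp
  finally show ?thesis by (simp add: k add.assoc)
qed

lemma bnd3: fixes f :: "nat \<Rightarrow> 'a::comm_monoid_add"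
  assumes "1 \<le> k" shows "(\<Sum>i<k. f i) = f 0 + (\<Sum>i=1..k-1. f i)"
proof -
  obtain m where k: "k = Suc m" using assms by (cases k) auto
  have "(\<Sum>i<k. f i) = (\<Sum>i\<le>m. f i)" by (simp add: k lessThan_Suc_atMost)
  also have "\<dots> = (\<Sum>i=0..m. f i)" by (simp add: atLeast0AtMost)
  also have "\<dots> = f 0 + (\<Sum>i=Suc 0..m. f i)" by (simp add: sum.atLeast_Suc_atMost add.assoc)
  finally show ?thesis by (simp add: k)
qed

lemma bnd2: fixes f :: "nat \<Rightarrow> 'a::comm_monoid_add"
  assumes "2 \<le> k" shows "(\<Sum>i\<le>k. f i) = f 0 + f 1 + (\<Sum>i=1..k-1. f (i+1))"
proof -
  obtain m where k: "k = Suc (Suc m)" using assms by (cases k; cases "k-1") auto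
  have "(\<Sum>i=1..k-1. f (i+1)) = (\<Sum>i=Suc 0..Suc m. f (Suc i))" by (simp add: k)
  also have "\<dots> = (\<Sum>i=Suc (Suc 0)..Suc (Suc m). f i)" by (rule sum.shift_bounds_cl_Suc_ivl[symmetric])
  finally have 1: "(\<Sum>i=1..k-1. f (i+1)) = (\<Sum>i=2..k. f i)" by (simp add: k numeral_2_eq_2)
  have "(\<Sum>i\<le>k. f i) = (\<Sum>i=0..k. f i)" by (simp add: atLeast0AtMost)
  also have "\<dots> = f 0 + (\<Sum>i=Suc 0..k. f i)" by (simp add: sum.atLeast_Suc_atMost k add.assoc)
  also have "(\<Sum>i=Suc 0..k. f i) = f 1 + (\<Sum>i=Suc (Suc 0)..k. f i)" by (simp add: sum.atLeast_Suc_atMost k add.assoc)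
  finally show ?thesis using 1 by (simp add: numeral_2_eq_2 add.assoc)
qed

definition evt :: "nat \<Rightarrow> rat \<Rightarrow> rat \<Rightarrow> nat \<Rightarrow> rat" where
  "evt k c r i = of_nat ((2*k) choose (2*i)) * c^(2*i) * r^(2*k-2*i)"
definition odt :: "nat \<Rightarrow> rat \<Rightarrow> rat \<Rightarrow> nat \<Rightarrow> rat" where
  "odt k c r i = of_nat ((2*k) choose (2*i+1)) * c^(2*i+1) * r^(2*k-(2*i+1))"

lemma term_eq:
  assumes "1 \<le> i" "i < k"
  shows "Tv k i x * r^(2*(k-i)) = x*6*(evt k 2 r i/2 - evt k 1 r i) + r^2*(evt k 2 r (i+1)/2 - evt k 1 r (i+1))
      - (r/2) * odt k 2 r i + evt k 1 r i"
proof -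
  obtain j where i: "i = Suc j" using assms by (cases i) auto
  obtain m where k: "k = Suc (i + m)" using less_imp_Suc_add[OF assms(2)] by blast
  have e0: "2*(k-i) = Suc (Suc (2*m))" "2*k - 2*i = Suc (Suc (2*m))" "2*k - 2*(i+1) = 2*m"
     "2*k-(2*i+1) = Suc (2*m)" using i k by auto
  have e1: "2*i - 1 = Suc (2*j)" "2*i = Suc (Suc (2*j))" "2*i+1 = Suc (Suc (Suc (2*j)))"
     "2*(i+1) = Suc (Suc (Suc (Suc (2*j))))" "2*i+2 = Suc (Suc (Suc (Suc (2*j))))"
    using i k by auto
  show ?thesis
    unfolding Tv_def evt_def odt_def e0 unfolding e1
    apply (simp only: power_Suc)
    apply (simp add: field_simps power2_eq_square)
    done
qed

lemma sig_closed:
  fixes r x :: rat and k :: nat assumes k: "2 \<le> k" and hx: "6*x = r - r^2"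
  shows "(\<Sum>i=1..k-1. Tv k i x * r^(2*(k-i))) = (r/2)*(r-2)^(2*k) + ((1-r)/2)*(r+1)^(2*k)
     + ((1-r)/2)*(r-1)^(2*k) + r^(2*k+1)/2 + 6*x*(1 - 2^(2*k)/2) - 1
     - (of_nat ((2*k) choose 2) - 2 * of_nat k + 1) * r^(2*k)"
proof -
  define g where "g i = evt k 2 r i/2 - evt k 1 r i" for i
  define G where "G = (\<Sum>i=1..k-1. g i)"
  define G1 where "G1 = (\<Sum>i=1..k-1. g (i+1))"
  define Osm where "Osm = (\<Sum>i=1..k-1. odt k 2 r i)"
  define E1 where "E1 = (\<Sum>i=1..k-1. evt k 1 r i)"
  define Ev where "Ev c = (\<Sum>i\<le>k. evt k c r i)" for c
  define Od where "Od c = (\<Sum>i<k. odt k c r i)" for c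
  have "(\<Sum>i=1..k-1. Tv k i x * r^(2*(k-i))) = (\<Sum>i=1..k-1. x*6*g i + r^2*g (i+1) - (r/2) * odt k 2 r i + evt k 1 r i)"
  proof (rule sum.cong[OF refl])
    fix i assume "i \<in> {1..k-1}"
    then have "1 \<le> i" "i < k" using k by auto
    from term_eq[OF this, of x r] show "Tv k i x * r^(2*(k-i)) = x*6*g i + r^2*g (i+1) - (r/2) * odt k 2 r i + evt k 1 r i"
      by (simp add: g_def)
  qed
  also have "\<dots> = x*6*G + r^2*G1 - (r/2)*Osm + E1"
    by (simp add: G_def G1_def Osm_def E1_def sum.distrib sum_subtractf sum_distrib_left)
  finally have S: "(\<Sum>i=1..k-1. Tv k i x * r^(2*(k-i))) = x*6*G + r^2*G1 - (r/2)*Osm + E1" .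
  have ev: "(r + c)^(2*k) = Ev c + Od c" "(r - c)^(2*k) = Ev c - Od c" for c
    using ev_od[of r c k] by (simp_all add: Ev_def Od_def evt_def odt_def)
  have sg: "(\<Sum>i\<le>k. g i) = Ev 2 / 2 - Ev 1"
    by (simp add: g_def Ev_def sum_subtractf sum_divide_distrib)
  have b1: "(\<Sum>i\<le>k. g i) = g 0 + G + g k" unfolding G_def by (rule bnd1) (use k in auto)
  have b2: "(\<Sum>i\<le>k. g i) = g 0 + g 1 + G1" unfolding G1_def by (rule bnd2) (use k in auto)
  have b3: "Od 2 = odt k 2 r 0 + Osm" unfolding Osm_def Od_def by (rule bnd3) (use k in auto)
  have b4: "Ev 1 = evt k 1 r 0 + E1 + evt k 1 r k" unfolding E1_def Ev_def by (rule bnd1) (use k in auto)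
  have v1: "evt k c r 0 = r^(2*k)" "evt k c r k = c^(2*k)" for c by (simp_all add: evt_def)
  have v2: "evt k c r 1 = of_nat ((2*k) choose 2) * c^2 * r^(2*k-2)" for c by (simp add: evt_def)
  have v3: "odt k 2 r 0 = 4 * of_nat k * r^(2*k-1)" by (simp add: odt_def)
  have "2 + (2*k-2) = 2*k" using k by simp
  hence p1: "r^(2*k) = r^2 * r^(2*k-2)" by (metis power_add)
  have p2: "r^(2*k) = r * r^(2*k-1)" using k by (simp add: power_Suc[symmetric] del: power_Suc)
  have p3: "r^(2*k+1) = r * r^(2*k)" by simp
  have x: "x = (r - r^2)/6" using hx by simp
  have p4: "r * r^(2*k-1) = r^2 * r^(2*k-2)" using p1 p2 by simp
  have Gv: "G = Ev 2/2 - Ev 1 - g 0 - g k" using sg b1 by simp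
  have G1v: "G1 = Ev 2/2 - Ev 1 - g 0 - g 1" using sg b2 by simp
  have Ov: "Osm = Od 2 - odt k 2 r 0" using b3 by simp
  have E1v: "E1 = Ev 1 - evt k 1 r 0 - evt k 1 r k" using b4 by simp
  have Evv: "Ev c = ((r + c)^(2*k) + (r - c)^(2*k))/2" for c using ev[of c] by simp
  have Odv: "Od c = ((r + c)^(2*k) - (r - c)^(2*k))/2" for c using ev[of c] by simp
  define R where "R = r^(2*k-2)"
  have gv: "g 0 = - (r^2*R)/2" "g k = 2^(2*k)/2 - 1" "g 1 = of_nat ((2*k) choose 2) * R"
    unfolding g_def v1 v2 R_def p1 by simp_all
  have p5: "r * r^(k*2 - Suc 0) = R * r^2" using p4 by (simp add: R_def mult.commute)
  show ?thesis
    apply (subst S)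
    unfolding Gv G1v Ov E1v gv v3 v1 Evv Odv x p3 mult.assoc[symmetric]
    unfolding p1 p4 R_def[symmetric]
    apply (simp add: field_simps p5)
    done
qed


lemma choose2: "of_nat ((2*k) choose 2) = (of_nat k * (2 * of_nat k - 1) :: rat)"
proof -
  have "(2*k) choose 2 = 2*k*(2*k-1) div 2" by (simp add: choose_two)
  also have "\<dots> = k*(2*k-1)" by simp
  finally have "(2*k) choose 2 = k*(2*k-1)" .
  moreover have "k = 0 \<or> of_nat (2*k-1) = (2 * of_nat k - 1 :: rat)" by (cases k) auto
  ultimately show ?thesis by auto
qed

lemma neg_pow_even: "(-(y::rat))^(2*k) = y^(2*k)" by simp

lemma sig_diff:
  fixes a b x :: rat and k :: nat assumes k: "2 \<le> k" and ab: "b = 1 - a" and hx: "6*x = a*b"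
  shows "(\<Sum>i=1..k-1. Tv k i x * a^(2*(k-i))) - (\<Sum>i=1..k-1. Tv k i x * b^(2*(k-i)))
     = - (of_nat (2*k-1) * of_nat (k-1)) * (a^(2*k) - b^(2*k))"
proof -
  have ha: "6*x = a - a^2" using hx ab by (simp add: algebra_simps power2_eq_square)
  have hb: "6*x = b - b^2" using hx unfolding ab by (simp add: algebra_simps power2_eq_square)
  have "b-2 = -(a+1)" using ab by simp
  hence q1: "(b-2)^(2*k) = (a+1)^(2*k)" by (simp only: neg_pow_even)
  have "b+1 = -(a-2)" using ab by simp
  hence q2: "(b+1)^(2*k) = (a-2)^(2*k)" by (simp only: neg_pow_even)
  have "b-1 = -(a)" using ab by simp
  hence q3: "(b-1)^(2*k) = a^(2*k)" by (simp only: neg_pow_even)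
  have "a-1 = -(b)" using ab by simp
  hence q4: "(a-1)^(2*k) = b^(2*k)" by (simp only: neg_pow_even)
  have q5: "1 - b = a" using ab by simp
  have nk: "of_nat (2*k-1) * of_nat (k-1) = (2*of_nat k - 1) * (of_nat k - 1 :: rat)"
    using k by (simp add: of_nat_diff)
  show ?thesis
    unfolding sig_closed[OF k ha] sig_closed[OF k hb] q1 q2 q3 q4 q5 nk choose2
    by (simp add: ab algebra_simps)
qed

declare P.simps[simp del]

lemma Tpoly_eval:
  "poly ([:0, 6 * of_nat ((2 * k) choose (2 * i)) * (2 ^ (2 * i - 1) - 1):]
           + [: of_nat ((2 * k) choose (2 * i + 2)) * (2 ^ (2 * i + 1) - 1)
                - 2 ^ (2 * i) * of_nat ((2 * k) choose (2 * i + 1))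
                + of_nat ((2 * k) choose (2 * i)) :]) x = Tv k i x"
  by (simp add: Tv_def)

lemma P_eval: "s * poly (P m) ((1 - s^2)/24) = ((1+s)/2)^(2*m) - ((1-s)/2)^(2*m)"
proof (induction m rule: less_induct)
  case (less m)
  define x where "x = (1 - s^2)/24"
  define a where "a = (1+s)/2"
  define b where "b = (1-s)/2"
  consider "m = 0" | "m = 1" | "2 \<le> m" by linarith
  then show ?case
  proof cases
    case 1 then show ?thesis by (subst P.simps) simp
  next
    case 2 then show ?thesis by (subst P.simps) (simp add: field_simps power2_eq_square)
  next
    case 3
    have Pm: "P m = smult (- 1 / (of_nat (2 * m - 1) * of_nat (m - 1)))
       (\<Sum>i = 1..m - 1.
          ([:0, 6 * of_nat ((2 * m) choose (2 * i)) * (2 ^ (2 * i - 1) - 1):]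
           + [: of_nat ((2 * m) choose (2 * i + 2)) * (2 ^ (2 * i + 1) - 1)
                - 2 ^ (2 * i) * of_nat ((2 * m) choose (2 * i + 1))
                + of_nat ((2 * m) choose (2 * i)) :]) * P (m - i))"
      using 3 by (subst P.simps) simp
    define D where "D = (of_nat (2 * m - 1) * of_nat (m - 1) :: rat)"
    have ab: "b = 1 - a" by (simp add: a_def b_def field_simps)
    have D0: "D \<noteq> 0" using 3 by (simp add: D_def)
    have hx: "6*x = a*b" by (simp add: x_def a_def b_def field_simps power2_eq_square)
    have "poly (P m) x = (- 1 / D) * (\<Sum>i = 1..m - 1. Tv m i x * poly (P (m-i)) x)"
      unfolding Pm D_def by (simp only: poly_smult poly_sum poly_mult Tpoly_eval)
    hence "s * poly (P m) x = (- 1 / D) * (\<Sum>i = 1..m - 1. Tv m i x * (s * poly (P (m-i)) x))"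
      by (simp add: sum_distrib_left algebra_simps)
    also have "\<dots> = (- 1 / D) * (\<Sum>i = 1..m - 1. Tv m i x * (a^(2*(m-i)) - b^(2*(m-i))))"
      using less 3 by (intro arg_cong[where f="\<lambda>t. (- 1 / D) * t"] sum.cong) (auto simp: x_def a_def b_def)
    also have "\<dots> = (- 1 / D) * ((\<Sum>i=1..m-1. Tv m i x * a^(2*(m-i))) - (\<Sum>i=1..m-1. Tv m i x * b^(2*(m-i))))"
      by (simp add: sum_subtractf algebra_simps)
    also have "\<dots> = a^(2*m) - b^(2*m)"
    proof (subst sig_diff[OF 3 ab hx])
      show "- 1 / D * (- (of_nat (2 * m - 1) * of_nat (m - 1)) * (a ^ (2 * m) - b ^ (2 * m))) = a ^ (2 * m) - b ^ (2 * m)"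
        unfolding D_def[symmetric] using D0 by simp
    qed
    finally show ?thesis by (simp add: x_def a_def b_def)
  qed
qed

lemma eval_unique:
  fixes p q :: "rat poly"
  assumes h: "\<And>s. s * poly p ((1-s^2)/24) = s * poly q ((1-s^2)/24)"
  shows "p = q"
proof (rule ccontr)
  assume "p \<noteq> q"
  hence "p - q \<noteq> 0" by simp
  hence fin: "finite {y. poly (p - q) y = 0}" by (rule poly_roots_finite)
  define g where "g n = (1 - (of_nat n + 1)^2)/(24::rat)" for n :: nat
  have "g ` UNIV \<subseteq> {y. poly (p - q) y = 0}"
  proof
    fix y assume "y \<in> g ` UNIV"
    then obtain n where y: "y = g n" by auto
    have "(of_nat n + 1 :: rat) \<noteq> 0" by (metis of_nat_Suc of_nat_eq_0_iff add.commute nat.distinct(1))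
    with h[of "of_nat n + 1"] show "y \<in> {y. poly (p - q) y = 0}" by (simp add: y g_def)
  qed
  hence "finite (g ` UNIV)" using fin finite_subset by blast
  moreover have "inj g"
  proof (rule injI)
    fix n m assume "g n = g m"
    hence "(of_nat n + 1 :: rat)^2 = (of_nat m + 1)^2" by (simp add: g_def)
    hence "(of_nat n + 1 :: rat) = of_nat m + 1"
      by (metis power2_eq_iff_nonneg of_nat_Suc of_nat_0_le_iff add.commute)
    thus "n = m" by simp
  qed
  ultimately have "finite (UNIV :: nat set)" using finite_imageD by blast
  thus False by simp
qed

fun Qr :: "nat \<Rightarrow> rat poly" where
  "Qr 0 = 0" | "Qr (Suc 0) = 1"
| "Qr (Suc (Suc m)) = [:1,-12:] * Qr (Suc m) - [:0,0,36:] * Qr m"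

lemma Qr_eval: "s * poly (Qr m) ((1 - s^2)/24) = ((1+s)/2)^(2*m) - ((1-s)/2)^(2*m)"
proof (induction m rule: Qr.induct)
  case 1 then show ?case by simp
next
  case 2 then show ?case by (simp add: field_simps power2_eq_square)
next
  case (3 m)
  define a where "a = (1+s)/2"
  define b where "b = (1-s)/2"
  define x where "x = (1 - s^2)/24"
  have ea: "a^4 = (1 - 12*x)*a^2 - 36*x^2" "b^4 = (1 - 12*x)*b^2 - 36*x^2"
    by (simp_all add: a_def b_def x_def field_simps power2_eq_square power4_eq_xxxx)
  have IH1: "s * poly (Qr (Suc m)) x = a^(2*m+2) - b^(2*m+2)" using 3(1) by (simp add: a_def b_def x_def)
  have IH2: "s * poly (Qr m) x = a^(2*m) - b^(2*m)" using 3(2) by (simp add: a_def b_def x_def)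
  have "s * poly (Qr (Suc (Suc m))) x = (1 - 12*x) * (s * poly (Qr (Suc m)) x) - 36*x^2 * (s * poly (Qr m) x)"
    by (simp add: algebra_simps power2_eq_square)
  also have "\<dots> = a^(2*m) * ((1 - 12*x)*a^2 - 36*x^2) - b^(2*m) * ((1 - 12*x)*b^2 - 36*x^2)"
    unfolding IH1 IH2 by (simp add: algebra_simps power_add power2_eq_square)
  also have "\<dots> = a^(2*m+4) - b^(2*m+4)" unfolding ea[symmetric] by (simp add: power_add)
  finally have "s * poly (Qr (Suc (Suc m))) x = a^(2*m+4) - b^(2*m+4)" .
  moreover have "2 * Suc (Suc m) = 2*m+4" by simp
  ultimately show ?case unfolding a_def b_def x_def by metis
qed

lemma P_Qr: "P m = Qr m"
  by (rule eval_unique) (simp add: P_eval Qr_eval)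

definition IntP :: "rat poly \<Rightarrow> bool" where "IntP p \<longleftrightarrow> (\<forall>n. coeff p n \<in> \<int>)"

lemma IntP_0: "IntP 0" by (simp add: IntP_def)
lemma IntP_1: "IntP 1" by (simp add: IntP_def coeff_1)
lemma IntP_add: "IntP p \<Longrightarrow> IntP q \<Longrightarrow> IntP (p + q)" by (simp add: IntP_def)
lemma IntP_diff: "IntP p \<Longrightarrow> IntP q \<Longrightarrow> IntP (p - q)" by (simp add: IntP_def)
lemma IntP_smult: "c \<in> \<int> \<Longrightarrow> IntP p \<Longrightarrow> IntP (smult c p)" by (simp add: IntP_def)
lemma IntP_pCons: "a \<in> \<int> \<Longrightarrow> IntP p \<Longrightarrow> IntP (pCons a p)"
  by (auto simp add: IntP_def coeff_pCons split: nat.splits)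
lemma IntP_mult: "IntP p \<Longrightarrow> IntP q \<Longrightarrow> IntP (p * q)"
  unfolding IntP_def coeff_mult by (auto intro!: Ints_sum Ints_mult)
lemma IntP_power: "IntP p \<Longrightarrow> IntP (p ^ n)"
  by (induction n) (auto intro: IntP_1 IntP_mult)
lemma IntP_sum: "(\<And>i. i \<in> A \<Longrightarrow> IntP (f i)) \<Longrightarrow> IntP (\<Sum>i\<in>A. f i)"
  unfolding IntP_def coeff_sum by (auto intro!: Ints_sum)

lemma IntP_Qr: "IntP (Qr m)"
proof (induction m rule: Qr.induct)
  case 1 then show ?case by (simp add: IntP_0)
next
  case 2 then show ?case by (simp add: IntP_1)
next
  case (3 m)
  have a: "IntP [:1,-12:]" "IntP [:0,0,36:]"
    by (auto intro!: IntP_pCons IntP_0 simp del: pCons_0_0)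
  show ?case by (simp only: Qr.simps) (intro IntP_diff IntP_mult a 3)
qed

lemma IntP_P: "IntP (P m)" using IntP_Qr P_Qr by simp

definition Wr :: "nat \<Rightarrow> rat poly" where
  "Wr m = (\<Sum>j\<le>2*m. smult (of_nat ((2*m) choose j) * (if odd j then 1 else 0)) ([:1,-24:]^(j div 2)))"

lemma W_eval: "2 * (s * poly (Wr m) ((1-s^2)/24)) = (1+s)^(2*m) - (1-s)^(2*m)"
proof -
  have "poly (Wr m) ((1-s^2)/24) = (\<Sum>j\<le>2*m. of_nat ((2*m) choose j) * (if odd j then 1 else 0) * (s^2)^(j div 2))"
  proof -
    have h2: "poly [:1,-24:] ((1-s^2)/24) = (s^2::rat)" by (simp add: field_simps)
    show ?thesis unfolding Wr_def by (simp only: poly_sum poly_smult poly_power h2)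
  qed
  also have "\<dots> = (\<Sum>i<m. of_nat ((2*m) choose (2*i+1)) * (s^2)^i)"
    unfolding sum_parity_split by simp
  finally have 1: "s * poly (Wr m) ((1-s^2)/24) = (\<Sum>i<m. of_nat ((2*m) choose (2*i+1)) * s^(2*i+1))"
    by (simp add: sum_distrib_left algebra_simps power_mult power2_eq_square power_mult_distrib)
  show ?thesis using ev_od[of 1 s m] unfolding 1 by (simp add: add.commute)
qed

lemma P_W: assumes "1 \<le> m" shows "smult (2^(2*m-1)) (P m) = Wr m"
proof (rule eval_unique)
  fix s :: rat
  have e: "2*m = Suc (2*m-1)" using assms by simp
  have "2^(2*m-1) * 2 = (2::rat)^(2*m)" by (subst e) (simp only: power_Suc mult.commute)
  hence c: "(2::rat)^(2*m-1) = 2^(2*m)/2" by (simp add: field_simps)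
  have "s * poly (smult (2^(2*m-1)) (P m)) ((1-s^2)/24) = 2^(2*m-1) * (s * poly (P m) ((1-s^2)/24))"
    by simp
  also have "\<dots> = ((1+s)^(2*m) - (1-s)^(2*m)) / 2"
    unfolding P_eval c by (simp add: power_divide field_simps)
  also have "\<dots> = s * poly (Wr m) ((1-s^2)/24)" using W_eval[of s m] by simp
  finally show "s * poly (smult (2^(2*m-1)) (P m)) ((1-s^2)/24) = s * poly (Wr m) ((1-s^2)/24)" .
qed

lemma fermat2: assumes p: "prime (l::nat)" shows "l dvd 2^l - 2"
proof -
  have l0: "l \<noteq> 0" and l1: "l \<noteq> 1" using p by (auto simp: prime_gt_1_nat)
  have fin: "finite {..l}" by simp
  have "(\<Sum>k\<le>l. l choose k) = (l choose 0) + (\<Sum>k\<in>{..l}-{0}. l choose k)"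
    by (rule sum.remove) auto
  also have "(\<Sum>k\<in>{..l}-{0}. l choose k) = (l choose l) + (\<Sum>k\<in>{..l}-{0}-{l}. l choose k)"
    by (rule sum.remove) (use l0 in auto)
  finally have "2^l = 2 + (\<Sum>k\<in>{..l}-{0}-{l}. l choose k)" by (simp add: choose_row_sum)
  moreover have "l dvd (\<Sum>k\<in>{..l}-{0}-{l}. l choose k)"
    by (rule dvd_sum) (use p l0 in \<open>auto intro!: dvd_choose_prime\<close>)
  ultimately show ?thesis by simp
qed

lemma mid_div:
  assumes p: "prime l" and o: "odd l" and j: "odd j" "j \<le> l+1" "j \<noteq> 1" "j \<noteq> l"
  shows "l dvd ((l+1) choose j)"
proof -
  obtain j' where j': "j = Suc j'" using j by (cases j) auto
  have "j' \<noteq> l" using j j' o by auto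
  hence "j' \<noteq> 0" "j' < l" "Suc j' < l" using j j' o by auto
  have l0: "l \<noteq> 0" using p by auto
  have "(l+1) choose j = (l choose j') + (l choose Suc j')" by (simp add: j')
  moreover have "l dvd (l choose j')" by (rule dvd_choose_prime) (use p l0 \<open>j' \<noteq> 0\<close> \<open>j' < l\<close> in auto)
  moreover have "l dvd (l choose Suc j')" by (rule dvd_choose_prime) (use p l0 \<open>Suc j' < l\<close> in auto)
  ultimately show ?thesis by simp
qed

lemma smult_sum_r: "smult a (\<Sum>j\<in>A. g j) = (\<Sum>j\<in>A. smult a (g j))"
  by (induction A rule: infinite_finite_induct) (auto simp: smult_add_right)

lemma cong_main:
  assumes p: "prime (l::nat)" and l3: "l > 3"
  shows "\<exists>c::int. coeff (P ((l + 1) div 2)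
                   - smult (of_nat ((l + 1) div 2)) (1 + [:1, -24:] ^ ((l - 1) div 2))) n
            = of_int (int l * c)"
proof -
  define k where "k = (l + 1) div 2"
  define h where "h = (l - 1) div 2"
  define Y where "Y = ([:1,-24:] :: rat poly)"
  have o: "odd l" using prime_odd_nat[OF p] l3 by auto
  have lk: "l + 1 = 2*k" "l = 2*h+1" "k = h + 1" using o by (auto simp: k_def h_def elim!: oddE)
  have k1: "1 \<le> k" using lk by simp
  have l0: "l \<noteq> 0" using l3 by simp
  define f where "f j = smult (of_nat ((l+1) choose j) * (if odd j then 1 else 0)) (Y^(j div 2))" for j
  define A where "A = {..l+1} - {1} - {l}"
  define R where "R = (\<Sum>j\<in>A. smult (of_nat (((l+1) choose j) div l) * (if odd j then 1 else 0)) (Y^(j div 2)))"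
  have W: "Wr k = (\<Sum>j\<le>l+1. f j)" unfolding Wr_def f_def Y_def lk(1) ..
  have "(\<Sum>j\<le>l+1. f j) = f 1 + (\<Sum>j\<in>{..l+1}-{1}. f j)" by (rule sum.remove) auto
  also have "(\<Sum>j\<in>{..l+1}-{1}. f j) = f l + (\<Sum>j\<in>A. f j)" unfolding A_def
    by (rule sum.remove) (use l3 in auto)
  finally have W2: "Wr k = f 1 + f l + (\<Sum>j\<in>A. f j)" unfolding W by (simp add: add.assoc)
  have f1: "f 1 = smult (of_nat (l+1)) 1" by (simp add: f_def)
  have ld: "l div 2 = h" using lk(2) by simp
  have fl: "f l = smult (of_nat (l+1)) (Y^h)" using o by (simp add: f_def ld)
  have fA: "(\<Sum>j\<in>A. f j) = smult (of_nat l) R"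
    unfolding R_def smult_sum_r
  proof (rule sum.cong[OF refl])
    fix j assume jA: "j \<in> A"
    show "f j = smult (of_nat l) (smult (of_nat (((l+1) choose j) div l) * (if odd j then 1 else 0)) (Y^(j div 2)))"
    proof (cases "odd j")
      case True
      then have "l dvd ((l+1) choose j)" using jA by (intro mid_div[OF p o]) (auto simp: A_def)
      then have "(l+1) choose j = l * (((l+1) choose j) div l)" by simp
      then have "(of_nat ((l+1) choose j) :: rat) = of_nat l * of_nat (((l+1) choose j) div l)"
        by (metis of_nat_mult)
      then show ?thesis using True by (simp add: f_def)
    next
      case False then show ?thesis by (simp add: f_def)
    qed
  qed
  have PW: "smult (2^l) (P k) = Wr k" using P_W[OF k1] lk by simp
  obtain t where t: "2^l - 2 = l * t" using fermat2[OF p] by (auto elim!: dvdE)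
  have "(2::nat)^l \<ge> 2" using power_increasing[of 1 l "2::nat"] l0 by simp
  hence "(2::nat)^l = l*t + 2" using t by linarith
  hence "(of_nat (2^l)::rat) = of_nat (l*t+2)" by (simp only:)
  hence t2: "(2::rat)^l = of_nat l * of_nat t + 2" by simp
  have IY: "IntP Y" unfolding Y_def by (auto intro!: IntP_pCons IntP_0 simp del: pCons_0_0)
  have IR: "IntP R" unfolding R_def
    by (intro IntP_sum IntP_smult IntP_power IY) auto
  define E where "E = P k - smult (of_nat k) (1 + Y^h)"
  have IE: "IntP E" unfolding E_def
    by (intro IntP_diff IntP_P IntP_smult IntP_add IntP_1 IntP_power IY) auto
  define e where "e = coeff E n"
  define r where "r = coeff R n"
  define c1 where "c1 = coeff (1::rat poly) n"
  define u where "u = coeff (Y^h) n"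
  define pk where "pk = coeff (P k) n"
  have "coeff (smult (2^l) (P k)) n = coeff (Wr k) n" using PW by simp
  hence eq1: "2^l * pk = of_nat (l+1) * c1 + of_nat (l+1) * u + of_nat l * r"
    unfolding W2 f1 fl fA by (simp only: coeff_add coeff_smult pk_def c1_def u_def r_def)
  have eE: "e = pk - of_nat k * (c1 + u)" by (simp add: e_def E_def pk_def c1_def u_def)
  have lr: "(of_nat l :: rat) = 2 * of_nat k - 1" using lk(1) by (metis add_diff_cancel_right' of_nat_1 of_nat_add of_nat_mult of_nat_numeral)
  have lk1: "(of_nat (l+1) :: rat) = 2 * of_nat k" unfolding lk(1) by simp
  have "2^l * e = 2^l*pk - 2^l * (of_nat k * (c1+u))" by (simp add: eE algebra_simps)
  also have "\<dots> = of_nat (l+1)*c1 + of_nat (l+1)*u + of_nat l * r - (of_nat l * of_nat t + 2) * (of_nat k*(c1+u))"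
    by (subst eq1[symmetric], subst t2, rule refl)
  also have "\<dots> = of_nat l * (r - of_nat t * of_nat k * (c1 + u))"
    unfolding lk1 by (simp add: algebra_simps)
  finally have key: "2^l * e = of_nat l * (r - of_nat t * of_nat k * (c1 + u))" .
  have "e \<in> \<int>" using IE by (simp add: IntP_def e_def)
  then obtain ei where ei: "e = of_int ei" by (auto elim!: Ints_cases)
  have "r - of_nat t * of_nat k * (c1 + u) \<in> \<int>"
    using IR IntP_1 IntP_power[OF IY] unfolding IntP_def r_def c1_def u_def
    by (intro Ints_diff Ints_mult Ints_add) auto
  then obtain ri where ri: "r - of_nat t * of_nat k * (c1 + u) = of_int ri" by (auto elim!: Ints_cases)
  have "(of_int (2^l * ei) :: rat) = of_int (int l * ri)" using key unfolding ei ri by simp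
  hence "2^l * ei = int l * ri" by (simp only: of_int_eq_iff)
  hence dv: "int l dvd 2^l * ei" by simp
  have pl: "prime (int l)" using p by simp
  have "\<not> int l dvd 2^l"
  proof
    assume "int l dvd 2^l"
    hence "int l dvd 2" using prime_dvd_power[OF pl] by blast
    hence "int l \<le> 2" by (rule zdvd_imp_le) simp
    thus False using l3 by simp
  qed
  hence "int l dvd ei" using dv prime_dvd_mult_iff[OF pl] by blast
  then obtain c where "ei = int l * c" by (auto elim!: dvdE)
  hence "coeff E n = of_int (int l * c)" using ei by (simp add: e_def)
  thus ?thesis unfolding E_def k_def h_def Y_def by blast
qed

theorem corollary7p2:
  shows "(\<forall>k \<ge> 2. \<forall>n. coeff (P k) n \<in> \<int>)
    \<and> (\<forall>l::nat. prime l \<and> l > 3 \<longrightarrow>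
         (\<forall>n. \<exists>c::int.
            coeff (P ((l + 1) div 2)
                   - smult (of_nat ((l + 1) div 2)) (1 + [:1, -24:] ^ ((l - 1) div 2))) n
            = of_int (int l * c)))"
  using IntP_P cong_main unfolding IntP_def by blast

end
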